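(* Let $n\ge 5$ be odd and let $G$ be the graph obtained from the cycle $C_n$ by adding one edge between two non-adjacent vertices of the cycle. Then $G$ is strongly EFX-orientable.
   Context: All graphs are finite and simple. For a graph $G=(V,E)$ and $v\in V$, $E(v)$ is the set of edges incident to $v$. A graphical instance on $G$ assigns to each vertex $v$ a valuation $f_v:2^E\to\mathbb{R}_{\ge 0}$ that is monotone ($A\subseteq B\Rightarrow f_v(A)\le f_v(B)$) and satisfies $f_v(X)=f_v(X\cap E(v))$ for all $X\subseteq E$. An orientation of $G$ chooses for each edge one of its endpoints as its head; vertex $v$ receives the bundle $X_v$ of edges whose head is $v$. The orientation is EFX if for all $u,v\in V$ and every $g\in X_v$, $f_u(X_u)\ge f_u(X_v\setminus\{g\})$. A graph $G$ is strongly EFX-orientable if for every graphical instance on $G$ there exists an EFX orientation. *)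

theory Defs
  imports Complex_Main
begin

definition incident :: "'v set set \<Rightarrow> 'v \<Rightarrow> 'v set set" where
  "incident E v = {e\<in>E. v \<in> e}"

definition graphical_instance ::
  "'v set \<Rightarrow> 'v set set \<Rightarrow> ('v \<Rightarrow> 'v set set \<Rightarrow> real) \<Rightarrow> bool" where
  "graphical_instance V E f \<longleftrightarrow>
     (\<forall>v\<in>V. (\<forall>X. X \<subseteq> E \<longrightarrow> f v X \<ge> 0)
          \<and> (\<forall>A B. A \<subseteq> B \<and> B \<subseteq> E \<longrightarrow> f v A \<le> f v B)
          \<and> (\<forall>X. X \<subseteq> E \<longrightarrow> f v X = f v (X \<inter> incident E v)))"

definition orientation :: "'v set set \<Rightarrow> ('v set \<Rightarrow> 'v) \<Rightarrow> bool" where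
  "orientation E h \<longleftrightarrow> (\<forall>e\<in>E. h e \<in> e)"

definition bundle_of :: "'v set set \<Rightarrow> ('v set \<Rightarrow> 'v) \<Rightarrow> 'v \<Rightarrow> 'v set set" where
  "bundle_of E h v = {e\<in>E. h e = v}"

definition EFX_orientation ::
  "'v set \<Rightarrow> 'v set set \<Rightarrow> ('v \<Rightarrow> 'v set set \<Rightarrow> real) \<Rightarrow> ('v set \<Rightarrow> 'v) \<Rightarrow> bool" where
  "EFX_orientation V E f h \<longleftrightarrow> orientation E h \<and>
     (\<forall>u\<in>V. \<forall>v\<in>V. \<forall>g\<in>bundle_of E h v.
        f u (bundle_of E h u) \<ge> f u (bundle_of E h v - {g}))"

definition strongly_EFX_orientable :: "'v set \<Rightarrow> 'v set set \<Rightarrow> bool" where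
  "strongly_EFX_orientable V E \<longleftrightarrow>
     (\<forall>f. graphical_instance V E f \<longrightarrow> (\<exists>h. EFX_orientation V E f h))"

definition cycle_edges :: "nat \<Rightarrow> nat set set" where
  "cycle_edges n = {{i, (i + 1) mod n} | i. i < n}"

end

theory Submission
  imports Defs
begin


definition sc :: "nat \<Rightarrow> nat \<Rightarrow> nat" where "sc n v = (v+1) mod n"
definition pd :: "nat \<Rightarrow> nat \<Rightarrow> nat" where "pd n v = (v + n - 1) mod n"
definition ce :: "nat \<Rightarrow> nat \<Rightarrow> nat set" where "ce n i = {i, (i+1) mod n}"
definition prefF :: "nat \<Rightarrow> (nat \<Rightarrow> nat set set \<Rightarrow> real) \<Rightarrow> nat \<Rightarrow> bool" where
  "prefF n f v \<longleftrightarrow> f v {ce n (pd n v)} \<le> f v {ce n v}"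

lemma sc_lt: "0 < n \<Longrightarrow> sc n v < n" by (simp add: sc_def)
lemma pd_lt: "0 < n \<Longrightarrow> pd n v < n" by (simp add: pd_def)

lemma sc_pd: "v < n \<Longrightarrow> sc n (pd n v) = v"
proof (cases "v = 0")
  case True
  assume "v < n" then show ?thesis using True by (simp add: sc_def pd_def)
next
  case False
  assume "v < n"
  then have "(v + n - 1) mod n = v - 1" using False
    by (metis Nat.add_diff_assoc2 One_nat_def Suc_leI add.commute le_add_diff_inverse2 less_imp_diff_less mod_add_self2 mod_less not_gr_zero)
  then show ?thesis using False \<open>v<n\<close> by (simp add: sc_def pd_def)
qed

lemma pd_sc: "v < n \<Longrightarrow> pd n (sc n v) = v"
proof (cases "v + 1 = n")
  case True
  assume "v < n" then show ?thesis using True by (simp add: sc_def pd_def)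
next
  case False
  assume "v < n"
  then have "(v+1) mod n = v + 1" using False by simp
  then show ?thesis using \<open>v<n\<close> by (simp add: sc_def pd_def)
qed

lemma sc_inj: "v < n \<Longrightarrow> w < n \<Longrightarrow> sc n v = sc n w \<Longrightarrow> v = w"
  by (metis pd_sc)
lemma pd_inj: "v < n \<Longrightarrow> w < n \<Longrightarrow> pd n v = pd n w \<Longrightarrow> v = w"
  by (metis sc_pd)

lemma sc_neq: assumes "2 \<le> n" "v < n" shows "sc n v \<noteq> v"
proof (cases "v + 1 < n")
  case True then show ?thesis by (simp add: sc_def)
next
  case False
  then have "v + 1 = n" using assms by simp
  then show ?thesis using assms by (simp add: sc_def)
qed

lemma sc_sc_neq: "3 \<le> n \<Longrightarrow> v < n \<Longrightarrow> sc n (sc n v) \<noteq> v"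
proof
  assume n: "3 \<le> n" and v: "v < n" and eq: "sc n (sc n v) = v"
  have "sc n (sc n v) = (v + 2) mod n" unfolding sc_def by (simp add: mod_Suc_eq)
  then have e: "(v+2) mod n = v" using eq by simp
  show False
  proof (cases "v + 2 < n")
    case True then show False using e by simp
  next
    case False
    then have "(v+2) mod n = (v + 2 - n) mod n" by (simp add: le_mod_geq)
    also have "\<dots> = v + 2 - n" using v n by simp
    finally have "(v+2) mod n = v + 2 - n" .
    then show False using e n False by linarith
  qed
qed

lemma ce_sc: "ce n i = {i, sc n i}" by (simp add: ce_def sc_def)

lemma cycle_edges_ce: "cycle_edges n = ce n ` {..<n}"
  unfolding cycle_edges_def ce_def by auto

lemma ce_inj: "3 \<le> n \<Longrightarrow> i < n \<Longrightarrow> j < n \<Longrightarrow> ce n i = ce n j \<Longrightarrow> i = j"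
  unfolding ce_sc doubleton_eq_iff using sc_sc_neq by force

lemma mem_ce: "v \<in> ce n i \<longleftrightarrow> v = i \<or> v = sc n i" by (simp add: ce_sc)



lemma efx_suff:
  assumes gi: "graphical_instance V E f"
    and two: "\<forall>e\<in>E. \<exists>x y. x \<noteq> y \<and> e = {x,y}"
    and ori: "\<forall>e\<in>E. h e \<in> e"
    and loc: "\<forall>e\<in>E. \<forall>u\<in>e. u \<noteq> h e \<longrightarrow>
                 (\<forall>g\<in>E. h g = h e \<longrightarrow> g = e) \<or> (\<exists>e''\<in>E. h e'' = u \<and> f u {e} \<le> f u {e''})"
  shows "EFX_orientation V E f h"
  unfolding EFX_orientation_def
proof (intro conjI ballI)
  show "orientation E h" using ori by (simp add: orientation_def)
next
  fix u v g
  assume u: "u \<in> V" and v: "v \<in> V" and g: "g \<in> bundle_of E h v"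
  note gu = bspec[OF gi[unfolded graphical_instance_def] u]
  have mono: "\<And>A B. A \<subseteq> B \<Longrightarrow> B \<subseteq> E \<Longrightarrow> f u A \<le> f u B"
    using conjunct1[OF conjunct2[OF gu]] by blast
  have locf: "\<And>X. X \<subseteq> E \<Longrightarrow> f u X = f u (X \<inter> incident E u)"
    using conjunct2[OF conjunct2[OF gu]] by blast
  have bu: "bundle_of E h u \<subseteq> E" by (auto simp: bundle_of_def)
  have bv: "bundle_of E h v \<subseteq> E" by (auto simp: bundle_of_def)
  show "f u (bundle_of E h v - {g}) \<le> f u (bundle_of E h u)"
  proof (cases "u = v")
    case True
    show ?thesis using True by (intro mono[OF _ bu]) auto
  next
    case False
    define Y where "Y = (bundle_of E h v - {g}) \<inter> incident E u"
    have eq: "f u (bundle_of E h v - {g}) = f u Y"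
      unfolding Y_def by (rule locf) (use bv in blast)
    show ?thesis
    proof (cases "Y = {}")
      case True
      have "f u {} \<le> f u (bundle_of E h u)" by (rule mono[OF _ bu]) simp
      then show ?thesis using eq True by simp
    next
      case False
      then obtain e where eY: "e \<in> Y" by blast
      then have eE: "e \<in> E" and he: "h e = v" and eg: "e \<noteq> g" and ue: "u \<in> e"
        unfolding Y_def bundle_of_def incident_def by auto
      have Ysub: "Y \<subseteq> {e}"
      proof
        fix e' assume "e' \<in> Y"
        then have e'E: "e' \<in> E" and he': "h e' = v" and ue': "u \<in> e'"
          unfolding Y_def bundle_of_def incident_def by auto
        have "v \<in> e'" using ori e'E he' by blast
        have "v \<in> e" using ori eE he by blast
        obtain x y where "x \<noteq> y" "e = {x,y}" using two eE by blast
        obtain x' y' where "x' \<noteq> y'" "e' = {x',y'}" using two e'E by blast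
        have "e = {u,v}" using \<open>e = {x,y}\<close> \<open>v \<in> e\<close> ue \<open>u \<noteq> v\<close> by auto
        moreover have "e' = {u,v}" using \<open>e' = {x',y'}\<close> \<open>v \<in> e'\<close> ue' \<open>u \<noteq> v\<close> by auto
        ultimately show "e' \<in> {e}" by simp
      qed
      then have Ye: "Y = {e}" using eY by blast
      have gE: "g \<in> E" and hg: "h g = v" using g by (auto simp: bundle_of_def)
      have "u \<noteq> h e" using he \<open>u \<noteq> v\<close> by simp
      then have "(\<forall>g\<in>E. h g = h e \<longrightarrow> g = e) \<or> (\<exists>e''\<in>E. h e'' = u \<and> f u {e} \<le> f u {e''})"
        using loc eE ue by blast
      moreover have "\<not> (\<forall>g\<in>E. h g = h e \<longrightarrow> g = e)" using gE hg he eg by auto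
      ultimately obtain e'' where e''E: "e'' \<in> E" and he'': "h e'' = u" and le: "f u {e} \<le> f u {e''}"
        by blast
      have "{e''} \<subseteq> bundle_of E h u" using e''E he'' by (auto simp: bundle_of_def)
      then have "f u {e''} \<le> f u (bundle_of E h u)" by (rule mono[OF _ bu])
      then show ?thesis using eq Ye le by simp
    qed
  qed
qed



locale theta =
  fixes n a b :: nat and f :: "nat \<Rightarrow> nat set set \<Rightarrow> real"
  assumes n3: "3 \<le> n" and an: "a < n" and bn: "b < n" and ab: "a \<noteq> b"
    and nce: "{a,b} \<notin> cycle_edges n"
    and gi: "graphical_instance {0..<n} (cycle_edges n \<union> {{a,b}}) f"
begin

abbreviation "EE \<equiv> cycle_edges n \<union> {{a,b}}"

definition pos where "pos v = (v + n - a) mod n"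
definition vp where "vp j = (a + j) mod n"
definition hd :: "nat \<Rightarrow> nat set \<Rightarrow> nat" where
  "hd r e = (if e = {a,b} then a else
     (let i = (THE i. i < n \<and> e = ce n i) in if pos i < r then sc n i else i))"

lemma n0: "0 < n" using n3 by simp

lemma ce_ne_c: "i < n \<Longrightarrow> ce n i \<noteq> {a,b}"
  using nce unfolding cycle_edges_ce by auto

lemma ce_in: "i < n \<Longrightarrow> ce n i \<in> EE"
  unfolding cycle_edges_ce by auto

lemma c_in: "{a,b} \<in> EE" by simp

lemma EE_cases: "e \<in> EE \<Longrightarrow> e = {a,b} \<or> (\<exists>i<n. e = ce n i)"
  unfolding cycle_edges_ce by auto

lemma hd_c: "hd r {a,b} = a" by (simp add: hd_def)

lemma hd_ce: assumes "i < n" shows "hd r (ce n i) = (if pos i < r then sc n i else i)"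
proof -
  have "(THE j. j < n \<and> ce n i = ce n j) = i"
    using assms ce_inj[OF n3] by (intro the_equality) auto
  then show ?thesis using ce_ne_c[OF assms] by (simp add: hd_def)
qed

lemma sc_a_ne_b: "sc n a \<noteq> b"
  using nce an unfolding cycle_edges_ce ce_sc by auto

lemma sc_b_ne_a: "sc n b \<noteq> a"
proof
  assume "sc n b = a"
  then have "{a,b} = ce n b" by (auto simp: ce_sc)
  then show False using nce bn unfolding cycle_edges_ce by auto
qed

lemma pd_a_ne_b: "pd n a \<noteq> b" using sc_b_ne_a sc_pd an by metis
lemma pd_b_ne_a: "pd n b \<noteq> a" using sc_a_ne_b sc_pd bn by metis

lemma pos_lt: "pos v < n" using n0 by (simp add: pos_def)
lemma vp_lt: "vp j < n" using n0 by (simp add: vp_def)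

lemma vp_pos: assumes "v < n" shows "vp (pos v) = v"
proof -
  have "vp (pos v) = (a + (v + n - a)) mod n" unfolding vp_def pos_def by (simp add: mod_add_right_eq)
  also have "a + (v + n - a) = v + n" using an by simp
  finally show ?thesis using assms by simp
qed

lemma pos_vp: "pos (vp j) = j mod n"
proof -
  have "pos (vp j) = ((a + j) mod n + (n - a)) mod n" unfolding vp_def pos_def using an
    by (simp add: Nat.add_diff_assoc less_imp_le)
  also have "\<dots> = (a + j + (n - a)) mod n" by (simp add: mod_add_left_eq)
  also have "a + j + (n - a) = j + n" using an by simp
  finally show ?thesis by simp
qed

lemma pos_inj: "v < n \<Longrightarrow> w < n \<Longrightarrow> pos v = pos w \<Longrightarrow> v = w"
  by (metis vp_pos)

lemma pos_a: "pos a = 0" by (simp add: pos_def)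
lemma pos_zero: "v < n \<Longrightarrow> pos v = 0 \<Longrightarrow> v = a"
  by (metis vp_pos vp_def add_0_right mod_less an)

lemma vp_0: "vp 0 = a" using an by (simp add: vp_def)
lemma vp_n: "vp n = a" using an by (simp add: vp_def)

lemma sc_vp: "sc n (vp j) = vp (j+1)"
  unfolding sc_def vp_def by (simp add: mod_Suc_eq)

lemma pd_vp: "1 \<le> j \<Longrightarrow> pd n (vp j) = vp (j-1)"
  by (metis sc_vp pd_sc vp_lt le_add_diff_inverse2)

lemma pos_sc: assumes "v < n" shows "pos (sc n v) = (if pos v = n - 1 then 0 else pos v + 1)"
proof -
  have "pos (sc n v) = pos (vp (pos v + 1))" using vp_pos[OF assms] sc_vp by metis
  also have "\<dots> = (pos v + 1) mod n" by (simp add: pos_vp)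
  finally show ?thesis using pos_lt[of v]
    by (cases "pos v = n - 1") (auto simp: n0 Suc_diff_1)
qed

lemma pos_pd: assumes "v < n" "v \<noteq> a" shows "pos (pd n v) = pos v - 1"
proof -
  have p: "pos v \<noteq> 0" using pos_zero assms by blast
  have "pos v = pos (sc n (pd n v))" using sc_pd assms by simp
  also have "\<dots> = (if pos (pd n v) = n - 1 then 0 else pos (pd n v) + 1)"
    using pos_sc pd_lt n0 by blast
  finally show ?thesis using p by (auto split: if_splits)
qed

lemma vp_pos_eq: "v < n \<Longrightarrow> t = vp r \<Longrightarrow> r = pos v \<Longrightarrow> t = v"
  using vp_pos by simp

end


context theta begin

abbreviation "goal \<equiv> \<exists>h. EFX_orientation {0..<n} EE f h"

lemma two_EE: "\<forall>e\<in>EE. \<exists>x y. x \<noteq> y \<and> e = {x,y}"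
proof
  fix e assume "e \<in> EE"
  then show "\<exists>x y. x \<noteq> y \<and> e = {x,y}"
  proof (cases rule: disjE[OF EE_cases])
    assume "e = {a,b}" then show ?thesis using ab by blast
  next
    assume "\<exists>i<n. e = ce n i"
    then obtain i where "i < n" "e = ce n i" by blast
    moreover have "sc n i \<noteq> i" using sc_neq[of n i] n3 \<open>i < n\<close> by simp
    ultimately show ?thesis unfolding ce_sc by blast
  qed
qed

lemma ori_hd: "\<forall>e\<in>EE. hd r e \<in> e"
proof
  fix e assume "e \<in> EE"
  then show "hd r e \<in> e"
  proof (cases rule: disjE[OF EE_cases])
    assume "e = {a,b}" then show ?thesis by (simp add: hd_c)
  next
    assume "\<exists>i<n. e = ce n i"
    then obtain i where "i < n" "e = ce n i" by blast
    then show ?thesis using hd_ce[of i r] by (simp add: ce_sc)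
  qed
qed

lemma fam:
  assumes r: "r \<le> n" and t: "t = vp r"
    and A1: "\<forall>i<n. pos i < r \<longrightarrow> sc n i = t \<longrightarrow> (\<exists>e''\<in>EE. hd r e'' = i \<and> f i {ce n i} \<le> f i {e''})"
    and A2: "\<forall>i<n. \<not> pos i < r \<longrightarrow> i = t \<longrightarrow> (\<exists>e''\<in>EE. hd r e'' = sc n i \<and> f (sc n i) {ce n i} \<le> f (sc n i) {e''})"
    and A3: "t = a \<longrightarrow> (\<exists>e''\<in>EE. hd r e'' = b \<and> f b {{a,b}} \<le> f b {e''})"
  shows goal
proof
  show "EFX_orientation {0..<n} EE f (hd r)"
  proof (rule efx_suff[OF gi two_EE ori_hd], intro ballI impI)
    fix e u assume eE: "e \<in> EE" and ue: "u \<in> e" and uh: "u \<noteq> hd r e"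
    show "(\<forall>g\<in>EE. hd r g = hd r e \<longrightarrow> g = e) \<or> (\<exists>e''\<in>EE. hd r e'' = u \<and> f u {e} \<le> f u {e''})"
    proof (cases rule: disjE[OF EE_cases[OF eE]])
      assume ec: "e = {a,b}"
      then have hu: "hd r e = a" "u = b" using uh ue hd_c by auto
      show ?thesis
      proof (cases "t = a")
        case True then show ?thesis using A3 ec hu by auto
      next
        case False
        have "\<forall>g\<in>EE. hd r g = a \<longrightarrow> g = e"
        proof (intro ballI impI)
          fix g assume gE: "g \<in> EE" and hg: "hd r g = a"
          show "g = e"
          proof (cases rule: disjE[OF EE_cases[OF gE]])
            assume "g = {a,b}" then show ?thesis using ec by simp
          next
            assume "\<exists>j<n. g = ce n j"
            then obtain j where j: "j < n" "g = ce n j" by blast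
            show ?thesis
            proof (cases "pos j < r")
              case True
              then have "sc n j = a" using hg j hd_ce by simp
              then have "pos (sc n j) = 0" using pos_a by simp
              then have "pos j = n - 1" using pos_sc[OF j(1)] by (auto split: if_splits)
              then have "r = n" using True r by linarith
              then have "t = a" using t vp_n by simp
              then show ?thesis using False by simp
            next
              case nf: False
              then have "j = a" using hg j hd_ce by simp
              then have "r = 0" using nf pos_a by simp
              then have "t = a" using t vp_0 by simp
              then show ?thesis using False by simp
            qed
          qed
        qed
        then show ?thesis using hu by simp
      qed
    next
      assume "\<exists>i<n. e = ce n i"
      then obtain i where i: "i < n" and ei: "e = ce n i" by blast
      show ?thesis
      proof (cases "pos i < r")
        case fw: True
        then have he: "hd r e = sc n i" using ei hd_ce i by simp
        then have ui: "u = i" using ue uh ei by (auto simp: ce_sc)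
        show ?thesis
        proof (cases "sc n i = t")
          case True then show ?thesis using A1 i fw ui ei he by auto
        next
          case False
          have "\<forall>g\<in>EE. hd r g = sc n i \<longrightarrow> g = e"
          proof (intro ballI impI)
            fix g assume gE: "g \<in> EE" and hg: "hd r g = sc n i"
            show "g = e"
            proof (cases rule: disjE[OF EE_cases[OF gE]])
              assume gc: "g = {a,b}"
              then have "sc n i = a" using hg hd_c by simp
              then have "pos (sc n i) = 0" using pos_a by simp
              then have "pos i = n - 1" using pos_sc[OF i] by (auto split: if_splits)
              then have "r = n" using fw r by linarith
              then have "t = a" using t vp_n by simp
              then show ?thesis using False \<open>sc n i = a\<close> by simp
            next
              assume "\<exists>j<n. g = ce n j"
              then obtain j where j: "j < n" "g = ce n j" by blast
              show ?thesis
              proof (cases "pos j < r")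
                case True
                then have "sc n j = sc n i" using hg j hd_ce by simp
                then have "j = i" using sc_inj j i by blast
                then show ?thesis using j ei by simp
              next
                case nf: False
                then have ji: "j = sc n i" using hg j hd_ce by simp
                show ?thesis
                proof (cases "pos i = n - 1")
                  case True
                  then have "pos j = 0" using pos_sc[OF i] ji by simp
                  then show ?thesis using nf fw by simp
                next
                  case pf: False
                  then have "pos j = pos i + 1" using pos_sc[OF i] ji by simp
                  then have "r = pos j" using nf fw by linarith
                  then have "t = j" using t vp_pos j by simp
                  then show ?thesis using False ji by simp
                qed
              qed
            qed
          qed
          then show ?thesis using he by simp
        qed
      next
        case bw: False
        then have he: "hd r e = i" using ei hd_ce i by simp
        then have ui: "u = sc n i" using ue uh ei by (auto simp: ce_sc)
        show ?thesis
        proof (cases "i = t")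
          case True then show ?thesis using A2 i bw ui ei he by auto
        next
          case False
          have "\<forall>g\<in>EE. hd r g = i \<longrightarrow> g = e"
          proof (intro ballI impI)
            fix g assume gE: "g \<in> EE" and hg: "hd r g = i"
            show "g = e"
            proof (cases rule: disjE[OF EE_cases[OF gE]])
              assume gc: "g = {a,b}"
              then have "i = a" using hg hd_c by simp
              then have "r = 0" using bw pos_a by simp
              then have "t = a" using t vp_0 by simp
              then show ?thesis using False \<open>i = a\<close> by simp
            next
              assume "\<exists>j<n. g = ce n j"
              then obtain j where j: "j < n" "g = ce n j" by blast
              show ?thesis
              proof (cases "pos j < r")
                case True
                then have ij: "sc n j = i" using hg j hd_ce by simp
                show ?thesis
                proof (cases "pos j = n - 1")
                  case True
                  then have "pos i = 0" using pos_sc[OF j(1)] ij by simp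
                  then show ?thesis using bw \<open>pos j < r\<close> by simp
                next
                  case pf: False
                  then have "pos i = pos j + 1" using pos_sc[OF j(1)] ij by simp
                  then have "r = pos i" using bw \<open>pos j < r\<close> by linarith
                  then have "t = i" using t vp_pos i by simp
                  then show ?thesis using False by simp
                qed
              next
                case nf: False
                then have "j = i" using hg j hd_ce by simp
                then show ?thesis using j ei by simp
              qed
            qed
          qed
          then show ?thesis using he by simp
        qed
      qed
    qed
  qed
qed

end


context theta begin

lemma famF:
  assumes tn: "t < n" and ta: "t \<noteq> a"
    and L: "if pd n t = a then f a {ce n a} \<le> f a {{a,b}}
            else f (pd n t) {ce n (pd n t)} \<le> f (pd n t) {ce n (pd n (pd n t))}"
    and R: "if sc n t = a then f a {ce n t} \<le> f a {{a,b}}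
            else f (sc n t) {ce n t} \<le> f (sc n t) {ce n (sc n t)}"
  shows goal
proof (rule fam[of "pos t" t])
  show "pos t \<le> n" using pos_lt[of t] by simp
  show "t = vp (pos t)" using vp_pos tn by simp
  have r1: "pos t \<noteq> 0" using pos_zero tn ta by blast
  show "\<forall>i<n. pos i < pos t \<longrightarrow> sc n i = t \<longrightarrow> (\<exists>e''\<in>EE. hd (pos t) e'' = i \<and> f i {ce n i} \<le> f i {e''})"
  proof (intro allI impI)
    fix i assume i: "i < n" and "pos i < pos t" and st: "sc n i = t"
    then have ip: "i = pd n t" using pd_sc by metis
    show "\<exists>e''\<in>EE. hd (pos t) e'' = i \<and> f i {ce n i} \<le> f i {e''}"
    proof (cases "pd n t = a")
      case True
      then show ?thesis using L ip hd_c by (intro bexI[of _ "{a,b}"]) auto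
    next
      case False
      have p1: "pos (pd n t) = pos t - 1" using pos_pd tn ta by blast
      have p2: "pos (pd n (pd n t)) = pos (pd n t) - 1" using pos_pd pd_lt n0 False by blast
      have p3: "pos (pd n t) \<noteq> 0" using pos_zero pd_lt n0 False by blast
      have lt: "pos (pd n (pd n t)) < pos t" using p1 p2 p3 r1 by linarith
      have h: "hd (pos t) (ce n (pd n (pd n t))) = pd n t"
        using hd_ce[of "pd n (pd n t)" "pos t"] lt pd_lt n0 sc_pd by simp
      show ?thesis using L False ip h ce_in pd_lt n0 by (intro bexI[of _ "ce n (pd n (pd n t))"]) auto
    qed
  qed
  show "\<forall>i<n. \<not> pos i < pos t \<longrightarrow> i = t \<longrightarrow> (\<exists>e''\<in>EE. hd (pos t) e'' = sc n i \<and> f (sc n i) {ce n i} \<le> f (sc n i) {e''})"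
  proof (intro allI impI)
    fix i assume i: "i < n" and "\<not> pos i < pos t" and it: "i = t"
    show "\<exists>e''\<in>EE. hd (pos t) e'' = sc n i \<and> f (sc n i) {ce n i} \<le> f (sc n i) {e''}"
    proof (cases "sc n t = a")
      case True
      then show ?thesis using R it hd_c by (intro bexI[of _ "{a,b}"]) auto
    next
      case False
      have "pos t \<noteq> n - 1"
      proof
        assume "pos t = n - 1"
        then have "pos (sc n t) = 0" using pos_sc tn by simp
        then show False using pos_zero sc_lt n0 False by blast
      qed
      then have "pos (sc n t) = pos t + 1" using pos_sc tn by simp
      then have h: "hd (pos t) (ce n (sc n t)) = sc n t"
        using hd_ce[of "sc n t" "pos t"] sc_lt n0 by simp
      show ?thesis using R False it h ce_in sc_lt n0 by (intro bexI[of _ "ce n (sc n t)"]) auto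
    qed
  qed
  show "t = a \<longrightarrow> (\<exists>e''\<in>EE. hd (pos t) e'' = b \<and> f b {{a,b}} \<le> f b {e''})" using ta by simp
qed

lemma famGm:
  assumes "f (sc n a) {ce n a} \<le> f (sc n a) {ce n (sc n a)}" and "f b {{a,b}} \<le> f b {ce n b}"
  shows goal
proof (rule fam[of 0 a])
  show "0 \<le> n" by simp
  show "a = vp 0" using vp_0 by simp
  show "\<forall>i<n. pos i < 0 \<longrightarrow> sc n i = a \<longrightarrow> (\<exists>e''\<in>EE. hd 0 e'' = i \<and> f i {ce n i} \<le> f i {e''})" by simp
  show "\<forall>i<n. \<not> pos i < 0 \<longrightarrow> i = a \<longrightarrow> (\<exists>e''\<in>EE. hd 0 e'' = sc n i \<and> f (sc n i) {ce n i} \<le> f (sc n i) {e''})"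
  proof (intro allI impI)
    fix i assume "i < n" "\<not> pos i < 0" "i = a"
    have h: "hd 0 (ce n (sc n a)) = sc n a" using hd_ce[of "sc n a" 0] sc_lt n0 by simp
    show "\<exists>e''\<in>EE. hd 0 e'' = sc n i \<and> f (sc n i) {ce n i} \<le> f (sc n i) {e''}"
      using assms(1) \<open>i = a\<close> h ce_in sc_lt n0 by (intro bexI[of _ "ce n (sc n a)"]) auto
  qed
  have h: "hd 0 (ce n b) = b" using hd_ce[of b 0] bn by simp
  show "a = a \<longrightarrow> (\<exists>e''\<in>EE. hd 0 e'' = b \<and> f b {{a,b}} \<le> f b {e''})"
    using assms(2) h ce_in bn by (intro impI bexI[of _ "ce n b"]) auto
qed

lemma famGp:
  assumes "f (pd n a) {ce n (pd n a)} \<le> f (pd n a) {ce n (pd n (pd n a))}"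
    and "f b {{a,b}} \<le> f b {ce n (pd n b)}"
  shows goal
proof (rule fam[of n a])
  show "n \<le> n" by simp
  show "a = vp n" using vp_n by simp
  show "\<forall>i<n. pos i < n \<longrightarrow> sc n i = a \<longrightarrow> (\<exists>e''\<in>EE. hd n e'' = i \<and> f i {ce n i} \<le> f i {e''})"
  proof (intro allI impI)
    fix i assume i: "i < n" "pos i < n" "sc n i = a"
    then have ip: "i = pd n a" using pd_sc by metis
    have h: "hd n (ce n (pd n (pd n a))) = pd n a"
      using hd_ce[of "pd n (pd n a)" n] pd_lt n0 pos_lt sc_pd by simp
    show "\<exists>e''\<in>EE. hd n e'' = i \<and> f i {ce n i} \<le> f i {e''}"
      using assms(1) ip h ce_in pd_lt n0 by (intro bexI[of _ "ce n (pd n (pd n a))"]) auto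
  qed
  show "\<forall>i<n. \<not> pos i < n \<longrightarrow> i = a \<longrightarrow> (\<exists>e''\<in>EE. hd n e'' = sc n i \<and> f (sc n i) {ce n i} \<le> f (sc n i) {e''})"
    using pos_lt by auto
  have h: "hd n (ce n (pd n b)) = b" using hd_ce[of "pd n b" n] pd_lt n0 pos_lt sc_pd bn by simp
  show "a = a \<longrightarrow> (\<exists>e''\<in>EE. hd n e'' = b \<and> f b {{a,b}} \<le> f b {e''})"
    using assms(2) h ce_in pd_lt n0 by (intro impI bexI[of _ "ce n (pd n b)"]) auto
qed

end


lemma prop_fwd:
  fixes lo hi i :: nat
  assumes nv: "\<forall>j. lo < j \<and> j < hi \<longrightarrow> \<not> (\<not> Q (j-1) \<and> Q (j+1))" and q: "\<not> Q lo"
  shows "lo + 2*i \<le> hi \<Longrightarrow> \<not> Q (lo + 2*i)"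
proof (induction i)
  case 0 then show ?case using q by simp
next
  case (Suc i)
  then have ih: "\<not> Q (lo + 2*i)" by simp
  have "lo < lo + 2*i + 1 \<and> lo + 2*i + 1 < hi" using Suc.prems by simp
  then have "\<not> (\<not> Q (lo + 2*i + 1 - 1) \<and> Q (lo + 2*i + 1 + 1))" using nv by blast
  then show ?case using ih by (simp add: algebra_simps)
qed

lemma prop_fwd':
  fixes lo hi k :: nat
  assumes nv: "\<forall>j. lo < j \<and> j < hi \<longrightarrow> \<not> (\<not> Q (j-1) \<and> Q (j+1))" and q: "\<not> Q lo"
    and "lo \<le> k" "k \<le> hi" "even (k - lo)"
  shows "\<not> Q k"
proof -
  obtain i where "k - lo = 2*i" using assms(5) by (rule evenE)
  then have "k = lo + 2*i" using assms(3) by simp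
  then show ?thesis using prop_fwd[OF nv q, of i] assms(4) by simp
qed

context theta begin

lemma swap: "theta n b a f"
  by unfold_locales (use n3 an bn ab nce gi in \<open>auto simp: insert_commute\<close>)

lemma goal_swap: "(\<exists>h. EFX_orientation {0..<n} (cycle_edges n \<union> {{b,a}}) f h) = goal"
  by (simp add: insert_commute)

lemma famF_b:
  assumes tn: "t < n" and ta: "t \<noteq> b"
    and L: "if pd n t = b then f b {ce n b} \<le> f b {{a,b}}
            else f (pd n t) {ce n (pd n t)} \<le> f (pd n t) {ce n (pd n (pd n t))}"
    and R: "if sc n t = b then f b {ce n t} \<le> f b {{a,b}}
            else f (sc n t) {ce n t} \<le> f (sc n t) {ce n (sc n t)}"
  shows goal
  using theta.famF[OF swap tn ta] L R by (simp add: insert_commute)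

lemma famGm_b:
  assumes "f (sc n b) {ce n b} \<le> f (sc n b) {ce n (sc n b)}" and "f a {{a,b}} \<le> f a {ce n a}"
  shows goal
  using theta.famGm[OF swap] assms by (simp add: insert_commute)

lemma famGp_b:
  assumes "f (pd n b) {ce n (pd n b)} \<le> f (pd n b) {ce n (pd n (pd n b))}"
    and "f a {{a,b}} \<le> f a {ce n (pd n a)}"
  shows goal
  using theta.famGp[OF swap] assms by (simp add: insert_commute)

abbreviation "P \<equiv> prefF n f"
abbreviation "Q j \<equiv> P (vp j)"

lemma vp_ne_a: "1 \<le> k \<Longrightarrow> k < n \<Longrightarrow> vp k \<noteq> a"
  using pos_vp pos_a by (metis mod_less not_one_le_zero)

lemma valley:
  assumes "2 \<le> j" "j + 2 \<le> n" "\<not> Q (j-1)" "Q (j+1)"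
  shows goal
proof (rule famF[of "vp j"])
  show "vp j < n" by (rule vp_lt)
  show "vp j \<noteq> a" using vp_ne_a assms by simp
  have pd: "pd n (vp j) = vp (j-1)" using pd_vp assms by simp
  have pd2: "pd n (vp (j-1)) = vp (j-1-1)" using pd_vp assms by simp
  have pda: "vp (j-1) \<noteq> a" using vp_ne_a assms by simp
  have sca: "vp (j+1) \<noteq> a" using vp_ne_a assms by simp
  have pdsc: "pd n (vp (j+1)) = vp j" using pd_vp by simp
  show "if pd n (vp j) = a then f a {ce n a} \<le> f a {{a,b}}
        else f (pd n (vp j)) {ce n (pd n (vp j))} \<le> f (pd n (vp j)) {ce n (pd n (pd n (vp j)))}"
    using assms(3) pd pd2 pda unfolding prefF_def by simp
  show "if sc n (vp j) = a then f a {ce n (vp j)} \<le> f a {{a,b}}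
        else f (sc n (vp j)) {ce n (vp j)} \<le> f (sc n (vp j)) {ce n (sc n (vp j))}"
    using assms(4) sc_vp sca pdsc unfolding prefF_def by simp
qed

definition "dd = pos b"

lemma dd_props: "2 \<le> dd" "dd + 2 \<le> n" "vp dd = b"
proof -
  show vb: "vp dd = b" unfolding dd_def using vp_pos bn by simp
  have "dd \<noteq> 0" unfolding dd_def using pos_zero bn ab by metis
  moreover have "dd \<noteq> 1"
  proof
    assume "dd = 1"
    then have "b = vp 1" using vb by simp
    also have "\<dots> = sc n a" using sc_vp[of 0] vp_0 by simp
    finally show False using sc_a_ne_b by simp
  qed
  ultimately show "2 \<le> dd" by simp
  have "dd < n" unfolding dd_def by (rule pos_lt)
  moreover have "dd \<noteq> n - 1"
  proof
    assume "dd = n - 1"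
    then have "sc n b = vp (n - 1 + 1)" using vb sc_vp by metis
    also have "\<dots> = a" using n0 vp_n by simp
    finally show False using sc_b_ne_a by simp
  qed
  ultimately show "dd + 2 \<le> n" by linarith
qed

lemma sc_a_vp: "sc n a = vp 1" using sc_vp[of 0] vp_0 by simp
lemma pd_a_vp: "pd n a = vp (n-1)" using pd_vp[of n] vp_n n0 by simp
lemma sc_b_vp: "sc n b = vp (dd+1)" using sc_vp dd_props by metis
lemma pd_b_vp: "pd n b = vp (dd-1)" using pd_vp dd_props by (metis le_trans one_le_numeral)

lemma dd_def': "dd = (b + n - a) mod n" unfolding dd_def pos_def by simp

end


context theta begin

abbreviation "nvall \<equiv> \<forall>j. 2 \<le> j \<and> j + 2 \<le> n \<longrightarrow> \<not> (\<not> Q (j-1) \<and> Q (j+1))"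

lemma valley_or: "(\<not> nvall \<Longrightarrow> goal)"
  using valley by blast

lemma vp_neq: "j < n \<Longrightarrow> k < n \<Longrightarrow> j \<noteq> k \<Longrightarrow> vp j \<noteq> vp k"
  using pos_vp by (metis mod_less)

lemma nv_sub:
  assumes nv: nvall and "1 \<le> lo" "hi + 1 \<le> n"
  shows "\<forall>j. lo < j \<and> j < hi \<longrightarrow> \<not> (\<not> Q (j-1) \<and> Q (j+1))"
proof (intro allI impI)
  fix j assume "lo < j \<and> j < hi"
  then have "2 \<le> j \<and> j + 2 \<le> n" using assms by linarith
  then show "\<not> (\<not> Q (j-1) \<and> Q (j+1))" using nv by blast
qed

lemma Q2_of:
  assumes nv: nvall and q: "Q (dd-1)" and ev: "even (dd - 1)"
  shows "Q 2"
proof (rule ccontr)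
  assume nq: "\<not> Q 2"
  have nv': "\<forall>j. 2 < j \<and> j < dd - 1 \<longrightarrow> \<not> (\<not> Q (j-1) \<and> Q (j+1))"
    using nv_sub[OF nv, of 2 "dd-1"] dd_props by simp
  have "dd - 1 \<ge> 2" using dd_props ev by (cases "dd = 2") auto
  moreover have "even (dd - 1 - 2)" using ev \<open>dd - 1 \<ge> 2\<close> by presburger
  ultimately have "\<not> Q (dd - 1)" using prop_fwd'[OF nv' nq, of "dd-1"] by blast
  then show False using q by simp
qed

lemma Qdd2_of:
  assumes nv: nvall and q: "\<not> Q 1" and ev: "even (dd - 1)"
  shows "\<not> Q (dd-2)"
proof -
  have nv': "\<forall>j. 1 < j \<and> j < dd - 1 \<longrightarrow> \<not> (\<not> Q (j-1) \<and> Q (j+1))"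
    using nv_sub[OF nv, of 1 "dd-1"] dd_props by simp
  have d3: "dd \<ge> 3" using dd_props ev by (cases "dd = 2") auto
  have "even (dd - 2 - 1)" using ev d3 by presburger
  then show ?thesis using prop_fwd'[OF nv' q, of "dd-2"] d3 by simp
qed

lemma ce_ab: "{a,b} = {b,a}" by (rule insert_commute)

lemma case4half:
  assumes h1: "f a {ce n a} \<le> f a {{a,b}}" and h2: "P (pd n b)" and ev: "even ((b + n - a) mod n - 1)"
  shows goal
proof (cases nvall)
  case False then show ?thesis using valley_or by blast
next
  case True
  have ev': "even (dd - 1)" using ev dd_def' by simp
  have Q2: "Q 2" using Q2_of[OF True _ ev'] h2 pd_b_vp by simp
  show ?thesis
  proof (rule famF[of "vp 1"])
    show "vp 1 < n" by (rule vp_lt)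
    show "vp 1 \<noteq> a" using vp_ne_a n3 by simp
    have "pd n (vp 1) = a" using pd_vp[of 1] vp_0 by simp
    then show "if pd n (vp 1) = a then f a {ce n a} \<le> f a {{a, b}}
      else f (pd n (vp 1)) {ce n (pd n (vp 1))} \<le> f (pd n (vp 1)) {ce n (pd n (pd n (vp 1)))}"
      using h1 by simp
    have s: "sc n (vp 1) = vp 2" using sc_vp[of 1] by (simp add: numeral_2_eq_2)
    have s2: "vp 2 \<noteq> a" using vp_ne_a n3 by simp
    have p2: "pd n (vp 2) = vp 1" using pd_vp[of 2] by simp
    show "if sc n (vp 1) = a then f a {ce n (vp 1)} \<le> f a {{a, b}}
      else f (sc n (vp 1)) {ce n (vp 1)} \<le> f (sc n (vp 1)) {ce n (sc n (vp 1))}"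
      using s s2 p2 Q2 unfolding prefF_def by simp
  qed
qed

lemma case3half:
  assumes h1: "f b {ce n (pd n b)} \<le> f b {{a,b}}" and h2: "\<not> P (sc n a)"
    and ev: "even ((b + n - a) mod n - 1)"
  shows goal
proof (cases nvall)
  case False then show ?thesis using valley_or by blast
next
  case True
  have ev': "even (dd - 1)" using ev dd_def' by simp
  have d3: "dd \<ge> 3" using dd_props ev' by (cases "dd = 2") auto
  have q: "\<not> Q (dd-2)" using Qdd2_of[OF True _ ev'] h2 sc_a_vp by simp
  have t: "pd n b = vp (dd - 1)" by (rule pd_b_vp)
  show ?thesis
  proof (rule famF_b[of "vp (dd-1)"])
    show "vp (dd-1) < n" by (rule vp_lt)
    show "vp (dd-1) \<noteq> b" using vp_neq[of "dd-1" dd] dd_props d3 by simp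
    have e: "dd - 1 - 1 = dd - 2" by simp
    have p: "pd n (vp (dd-1)) = vp (dd-2)" using pd_vp[of "dd-1"] d3 e by simp
    have pb: "vp (dd-2) \<noteq> b" using vp_neq[of "dd-2" dd] dd_props d3 by simp
    show "if pd n (vp (dd-1)) = b then f b {ce n b} \<le> f b {{a, b}}
      else f (pd n (vp (dd-1))) {ce n (pd n (vp (dd-1)))} \<le> f (pd n (vp (dd-1))) {ce n (pd n (pd n (vp (dd-1))))}"
      using p pb q unfolding prefF_def by simp
    have s: "sc n (vp (dd-1)) = b" using sc_vp[of "dd-1"] d3 dd_props by simp
    show "if sc n (vp (dd-1)) = b then f b {ce n (vp (dd-1))} \<le> f b {{a, b}}
      else f (sc n (vp (dd-1))) {ce n (vp (dd-1))} \<le> f (sc n (vp (dd-1))) {ce n (sc n (vp (dd-1)))}"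
      using s h1 t by simp
  qed
qed

end


context theta begin

lemma notP_le: "\<not> P v \<Longrightarrow> f v {ce n v} \<le> f v {ce n (pd n v)}"
  unfolding prefF_def by simp

lemma arccase:
  assumes h1: "\<not> P (sc n a)" and h2: "P (pd n b)" and odd: "odd n"
  shows goal
proof (cases nvall)
  case False then show ?thesis using valley_or by blast
next
  case nv: True
  have q1: "\<not> Q 1" using h1 sc_a_vp by simp
  have qd: "Q (dd-1)" using h2 pd_b_vp by simp
  have ev': "even (dd - 1)"
  proof (rule ccontr)
    assume od: "odd (dd - 1)"
    have nv': "\<forall>j. 1 < j \<and> j < dd - 1 \<longrightarrow> \<not> (\<not> Q (j-1) \<and> Q (j+1))"
      using nv_sub[OF nv, of 1 "dd-1"] dd_props by simp
    have "even (dd - 1 - 1)" using od dd_props by presburger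
    then have "\<not> Q (dd - 1)" using prop_fwd'[OF nv' q1, of "dd-1"] dd_props by simp
    then show False using qd by simp
  qed
  have ev: "even ((b + n - a) mod n - 1)" using ev' dd_def' by simp
  have d3: "dd \<ge> 3" using dd_props ev' by (cases "dd = 2") auto
  have Q2: "Q 2" using Q2_of[OF nv qd ev'] .
  have Qd2: "\<not> Q (dd-2)" using Qdd2_of[OF nv q1 ev'] .
  show ?thesis
  proof (cases "f a {ce n a} \<le> f a {{a,b}}")
    case True then show ?thesis using case4half h2 ev by blast
  next
    case c1: False
    show ?thesis
    proof (cases "f b {ce n (pd n b)} \<le> f b {{a,b}}")
      case True then show ?thesis using case3half h1 ev by blast
    next
      case c2: False
      show ?thesis
      proof (cases "f a {ce n a} \<le> f a {ce n (pd n a)}")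
        case True
        show ?thesis
        proof (rule famF_b[of "vp 1"])
          show "vp 1 < n" by (rule vp_lt)
          show "vp 1 \<noteq> b" using sc_a_ne_b sc_a_vp by simp
          have p: "pd n (vp 1) = a" using pd_vp[of 1] vp_0 by simp
          then show "if pd n (vp 1) = b then f b {ce n b} \<le> f b {{a, b}}
            else f (pd n (vp 1)) {ce n (pd n (vp 1))} \<le> f (pd n (vp 1)) {ce n (pd n (pd n (vp 1)))}"
            using True ab by simp
          have s: "sc n (vp 1) = vp 2" using sc_vp[of 1] by (simp add: numeral_2_eq_2)
          have s2: "vp 2 \<noteq> b" using vp_neq[of 2 dd] dd_props d3 by simp
          have p2: "pd n (vp 2) = vp 1" using pd_vp[of 2] by simp
          show "if sc n (vp 1) = b then f b {ce n (vp 1)} \<le> f b {{a, b}}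
            else f (sc n (vp 1)) {ce n (vp 1)} \<le> f (sc n (vp 1)) {ce n (sc n (vp 1))}"
            using s s2 p2 Q2 unfolding prefF_def by simp
        qed
      next
        case c3: False
        show ?thesis
        proof (cases "f b {ce n (pd n b)} \<le> f b {ce n b}")
          case True
          show ?thesis
          proof (rule famF[of "vp (dd-1)"])
            show "vp (dd-1) < n" by (rule vp_lt)
            show "vp (dd-1) \<noteq> a" using vp_ne_a dd_props d3 by simp
            have e: "dd - 1 - 1 = dd - 2" by simp
            have p: "pd n (vp (dd-1)) = vp (dd-2)" using pd_vp[of "dd-1"] d3 e by simp
            have pa: "vp (dd-2) \<noteq> a" using vp_ne_a dd_props d3 by simp
            show "if pd n (vp (dd-1)) = a then f a {ce n a} \<le> f a {{a, b}}
              else f (pd n (vp (dd-1))) {ce n (pd n (vp (dd-1)))} \<le> f (pd n (vp (dd-1))) {ce n (pd n (pd n (vp (dd-1))))}"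
              using p pa Qd2 unfolding prefF_def by simp
            have s: "sc n (vp (dd-1)) = b" using sc_vp[of "dd-1"] d3 dd_props by simp
            show "if sc n (vp (dd-1)) = a then f a {ce n (vp (dd-1))} \<le> f a {{a, b}}
              else f (sc n (vp (dd-1))) {ce n (vp (dd-1))} \<le> f (sc n (vp (dd-1))) {ce n (sc n (vp (dd-1)))}"
              using s True pd_b_vp ab by simp
          qed
        next
          case c4: False
          have fa: "f a {{a,b}} \<le> f a {ce n a}" using c1 by simp
          have fb: "f b {{a,b}} \<le> f b {ce n (pd n b)}" using c2 by simp
          show ?thesis
          proof (cases "P (pd n a)")
            case False
            then show ?thesis using famGp notP_le fb by blast
          next
            case pa: True
            show ?thesis
            proof (cases "P (sc n b)")
              case True
              then have "f (sc n b) {ce n b} \<le> f (sc n b) {ce n (sc n b)}"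
                unfolding prefF_def using pd_sc bn by simp
              then show ?thesis using famGm_b fa by blast
            next
              case False
              have qlo: "\<not> Q (dd+1)" using False sc_b_vp by simp
              have qhi: "Q (n-1)" using pa pd_a_vp by simp
              have nv'': "\<forall>j. dd + 1 < j \<and> j < n - 1 \<longrightarrow> \<not> (\<not> Q (j-1) \<and> Q (j+1))"
                using nv_sub[OF nv, of "dd+1" "n-1"] dd_props by simp
              have "even (n - 1 - (dd + 1))" using odd ev' dd_props by presburger
              then have "\<not> Q (n-1)" using prop_fwd'[OF nv'' qlo, of "n-1"] dd_props by simp
              then show ?thesis using qhi by simp
            qed
          qed
        qed
      qed
    qed
  qed
qed

end


context theta begin

lemma dsum: "(b + n - a) mod n + (a + n - b) mod n = n"
proof (cases "a < b")
  case True
  have e1: "b + n - a = (b - a) + n" using True by simp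
  have "(b + n - a) mod n = b - a" unfolding e1 using bn by simp
  moreover have "a + n - b = n - (b - a)" using True bn by simp
  moreover have "(n - (b - a)) mod n = n - (b - a)" using True n0 by (intro mod_less) linarith
  ultimately show ?thesis using True bn by simp
next
  case False
  then have ba: "b < a" using ab by simp
  have e1: "a + n - b = (a - b) + n" using ba by simp
  have "(a + n - b) mod n = a - b" unfolding e1 using an by simp
  moreover have "b + n - a = n - (a - b)" using ba an by simp
  moreover have "(n - (a - b)) mod n = n - (a - b)" using ba n0 by (intro mod_less) linarith
  ultimately show ?thesis using ba an by simp
qed

lemma main_loc:
  assumes odd: "odd n"
  shows goal
proof -
  have gen: "\<forall>x y::nat. x + y = n \<longrightarrow> 2 \<le> x \<longrightarrow> even (x - 1) \<or> even (y - 1)"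
    using odd by presburger
  have x2: "2 \<le> (b + n - a) mod n" using dd_props dd_def' by simp
  have par: "even ((b + n - a) mod n - 1) \<or> even ((a + n - b) mod n - 1)"
    using gen dsum x2 by blast
  have sw: "\<And>X. (X \<Longrightarrow> \<exists>h. EFX_orientation {0..<n} (cycle_edges n \<union> {{b,a}}) f h) \<Longrightarrow> X \<Longrightarrow> goal"
    using goal_swap by blast
  have Psca: "P (sc n a) = (f (sc n a) {ce n a} \<le> f (sc n a) {ce n (sc n a)})"
    unfolding prefF_def using pd_sc an by simp
  have Pscb: "P (sc n b) = (f (sc n b) {ce n b} \<le> f (sc n b) {ce n (sc n b)})"
    unfolding prefF_def using pd_sc bn by simp
  show ?thesis
  proof (cases "\<not> P (pd n a) \<and> P (sc n a)")
    case True
    show ?thesis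
    proof (rule famF_b[of a])
      show "a < n" "a \<noteq> b" using an ab by auto
      show "if pd n a = b then f b {ce n b} \<le> f b {{a, b}}
        else f (pd n a) {ce n (pd n a)} \<le> f (pd n a) {ce n (pd n (pd n a))}"
        using pd_a_ne_b notP_le True by simp
      show "if sc n a = b then f b {ce n a} \<le> f b {{a, b}}
        else f (sc n a) {ce n a} \<le> f (sc n a) {ce n (sc n a)}"
        using sc_a_ne_b Psca True by simp
    qed
  next
    case n1: False
    show ?thesis
    proof (cases "\<not> P (pd n b) \<and> P (sc n b)")
      case True
      show ?thesis
      proof (rule famF[of b])
        show "b < n" "b \<noteq> a" using bn ab by auto
        show "if pd n b = a then f a {ce n a} \<le> f a {{a, b}}
          else f (pd n b) {ce n (pd n b)} \<le> f (pd n b) {ce n (pd n (pd n b))}"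
          using pd_b_ne_a notP_le True by simp
        show "if sc n b = a then f a {ce n b} \<le> f a {{a, b}}
          else f (sc n b) {ce n b} \<le> f (sc n b) {ce n (sc n b)}"
          using sc_b_ne_a Pscb True by simp
      qed
    next
      case n2: False
      show ?thesis
      proof (cases "\<not> P (sc n a) \<and> P (pd n b)")
        case True then show ?thesis using arccase odd by blast
      next
        case n3: False
        show ?thesis
        proof (cases "\<not> P (sc n b) \<and> P (pd n a)")
          case True
          then show ?thesis using theta.arccase[OF swap] odd goal_swap by blast
        next
          case n4: False
          show ?thesis
          proof (cases "P (sc n a)")
            case True
            then have all: "P (sc n a)" "P (pd n a)" "P (sc n b)" "P (pd n b)" using n1 n2 n3 n4 by blast+
            show ?thesis
            proof (cases "f b {{a,b}} \<le> f b {ce n b}")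
              case True then show ?thesis using famGm all Psca by blast
            next
              case fb: False
              show ?thesis
              proof (cases "f a {{a,b}} \<le> f a {ce n a}")
                case True then show ?thesis using famGm_b all Pscb by blast
              next
                case fa: False
                show ?thesis
                proof (cases "even ((b + n - a) mod n - 1)")
                  case True then show ?thesis using case4half all fa by simp
                next
                  case False
                  then have "even ((a + n - b) mod n - 1)" using par by blast
                  then show ?thesis using theta.case4half[OF swap, of] all fb goal_swap
                    by (simp add: insert_commute)
                qed
              qed
            qed
          next
            case False
            then have all: "\<not> P (sc n a)" "\<not> P (pd n a)" "\<not> P (sc n b)" "\<not> P (pd n b)" using n1 n2 n3 n4 by blast+
            show ?thesis
            proof (cases "f b {{a,b}} \<le> f b {ce n (pd n b)}")
              case True then show ?thesis using famGp all notP_le by blast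
            next
              case fb: False
              show ?thesis
              proof (cases "f a {{a,b}} \<le> f a {ce n (pd n a)}")
                case True then show ?thesis using famGp_b all notP_le by blast
              next
                case fa: False
                show ?thesis
                proof (cases "even ((b + n - a) mod n - 1)")
                  case True then show ?thesis using case3half all fb by simp
                next
                  case False
                  then have "even ((a + n - b) mod n - 1)" using par by blast
                  then show ?thesis using theta.case3half[OF swap] all fa goal_swap
                    by (simp add: insert_commute)
                qed
              qed
            qed
          qed
        qed
      qed
    qed
  qed
qed

end

theorem mainTheorem8:
  fixes n a b :: nat
  assumes "n \<ge> 5" and "odd n"
    and "a < n" and "b < n" and "a \<noteq> b"
    and "{a, b} \<notin> cycle_edges n"
  shows "strongly_EFX_orientable {0..<n} (cycle_edges n \<union> {{a, b}})"
  unfolding strongly_EFX_orientable_def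
proof (intro allI impI)
  fix f assume gi: "graphical_instance {0..<n} (cycle_edges n \<union> {{a, b}}) f"
  interpret theta n a b f
    by unfold_locales (use assms gi in auto)
  show "\<exists>h. EFX_orientation {0..<n} (cycle_edges n \<union> {{a, b}}) f h"
    using main_loc assms(2) by blast
qed

end
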